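(* For every $g\ge 1$ and every degree value $d$ occurring in $\mathcal{H}_g$, $k_{\rm nn}(d)=g+1$.
   Context: $\mathcal{H}_1$ is the 4-cycle. For $g>1$, $\mathcal{H}_g$ is obtained from $\mathcal{H}_{g-1}$ by keeping every edge $\{u,v\}$ and adding two new vertices $w,w'$ with edges $\{u,w\},\{w,w'\},\{w',v\}$. For a degree value $d$, $k_{\rm nn}(d)$ is the total degree of all neighbors of all vertices of degree $d$ (summed over each such vertex and each of its neighbors) divided by the total degree of the vertices of degree $d$; i.e. the average degree of the nearest neighbors of vertices of degree $d$. *)

theory Defs
  imports Complex_Main
begin

text \<open>Vertices: the four vertices of the initial 4-cycle, and the two new vertices
  created in generation g on the (old) edge {u,v}: Mid g u v is the one adjacent
  to u, Mid g v u the one adjacent to v.\<close>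
datatype vtx = Orig nat | Mid nat vtx vtx

text \<open>The graph is represented by its symmetric adjacency relation (set of ordered
  pairs; each undirected edge appears in both orientations).\<close>
definition cycle4 :: "(vtx \<times> vtx) set" where
  "cycle4 = {(Orig i, Orig ((i + 1) mod 4)) | i. i < 4}
          \<union> {(Orig ((i + 1) mod 4), Orig i) | i. i < 4}"

definition grow :: "nat \<Rightarrow> (vtx \<times> vtx) set \<Rightarrow> (vtx \<times> vtx) set" where
  "grow g E = E
     \<union> {(u, Mid g u v) | u v. (u, v) \<in> E}
     \<union> {(Mid g u v, u) | u v. (u, v) \<in> E}
     \<union> {(Mid g u v, Mid g v u) | u v. (u, v) \<in> E}"

fun H :: "nat \<Rightarrow> (vtx \<times> vtx) set" where
  "H 0 = {}"
| "H (Suc 0) = cycle4"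
| "H (Suc (Suc n)) = grow (Suc (Suc n)) (H (Suc n))"

definition verts :: "nat \<Rightarrow> vtx set" where
  "verts g = fst ` H g"

definition deg :: "nat \<Rightarrow> vtx \<Rightarrow> nat" where
  "deg g v = card {w. (v, w) \<in> H g}"

definition knn :: "nat \<Rightarrow> nat \<Rightarrow> real" where
  "knn g d =
     (\<Sum>v\<in>{v \<in> verts g. deg g v = d}. \<Sum>w\<in>{w. (v, w) \<in> H g}. real (deg g w))
     / (\<Sum>v\<in>{v \<in> verts g. deg g v = d}. real (deg g v))"

end

theory Submission
  imports Defs
begin

definition nbr :: "(vtx \<times> vtx) set \<Rightarrow> vtx \<Rightarrow> vtx set" where
  "nbr E v = {w. (v, w) \<in> E}"
definition dg :: "(vtx \<times> vtx) set \<Rightarrow> vtx \<Rightarrow> nat" where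
  "dg E v = card (nbr E v)"
definition SS :: "(vtx \<times> vtx) set \<Rightarrow> vtx \<Rightarrow> nat" where
  "SS E v = (\<Sum>w\<in>nbr E v. dg E w)"
fun birth :: "vtx \<Rightarrow> nat" where
  "birth (Orig i) = 1"
| "birth (Mid k a b) = k"

definition good :: "nat \<Rightarrow> (vtx \<times> vtx) set \<Rightarrow> bool" where
  "good m E \<longleftrightarrow> finite E \<and> (\<forall>u v. (u,v) \<in> E \<longrightarrow> (v,u) \<in> E)
    \<and> (\<forall>p\<in>E. 1 \<le> birth (fst p) \<and> birth (fst p) \<le> m)
    \<and> (\<forall>v\<in>fst ` E. dg E v = 2 ^ (m + 1 - birth v))
    \<and> (\<forall>t. (\<Sum>v\<in>{v\<in>fst ` E. birth v = t}. SS E v)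
           = (m+1) * (\<Sum>v\<in>{v\<in>fst ` E. birth v = t}. dg E v))"

lemma nbr_finite: "finite E \<Longrightarrow> finite (nbr E v)"
proof -
  assume "finite E"
  moreover have "nbr E v \<subseteq> snd ` E" by (force simp: nbr_def)
  ultimately show ?thesis by (meson finite_imageI finite_subset)
qed

lemma nbr_sub: "\<forall>u v. (u,v) \<in> E \<longrightarrow> (v,u) \<in> E \<Longrightarrow> w \<in> nbr E v \<Longrightarrow> w \<in> fst ` E"
  by (force simp: nbr_def)

lemma sigma_sum:
  assumes "finite E"
  shows "(\<Sum>v\<in>fst`E. \<Sum>w\<in>nbr E v. h v w) = (\<Sum>p\<in>E. h (fst p) (snd p))"
proof -
  have S: "Sigma (fst`E) (nbr E) = E" by (force simp: nbr_def)
  have "(\<Sum>v\<in>fst`E. \<Sum>w\<in>nbr E v. h v w) = (\<Sum>(x,y)\<in>Sigma (fst`E) (nbr E). h x y)"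
    by (rule sum.Sigma) (auto simp: assms nbr_finite)
  also have "\<dots> = (\<Sum>p\<in>E. h (fst p) (snd p))" unfolding S by (simp add: case_prod_beta)
  finally show ?thesis .
qed

lemma sum_fst:
  assumes "finite E"
  shows "(\<Sum>p\<in>E. f (fst p)) = (\<Sum>v\<in>fst`E. dg E v * f v)"
  using sigma_sum[OF assms, of "\<lambda>v w. f v"] by (simp add: dg_def)

lemma sum_sq:
  assumes "finite E" and sym: "\<forall>u v. (u,v) \<in> E \<longrightarrow> (v,u) \<in> E"
  shows "(\<Sum>v\<in>fst`E. SS E v) = (\<Sum>v\<in>fst`E. dg E v * dg E v)"
proof -
  have "(\<Sum>v\<in>fst`E. SS E v) = (\<Sum>p\<in>E. dg E (snd p))"
    unfolding SS_def by (rule sigma_sum[OF assms(1)])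
  also have "E = prod.swap ` E" using sym by force
  hence "(\<Sum>p\<in>E. dg E (snd p)) = (\<Sum>p\<in>prod.swap ` E. dg E (snd p))" by simp
  also have "\<dots> = (\<Sum>p\<in>E. dg E (fst p))" by (subst sum.reindex) auto
  also have "\<dots> = (\<Sum>v\<in>fst`E. dg E v * dg E v)" by (rule sum_fst[OF assms(1)])
  finally show ?thesis .
qed

lemma total:
  assumes "good m E"
  shows "(\<Sum>v\<in>fst`E. SS E v) = (m+1) * (\<Sum>v\<in>fst`E. dg E v)"
proof -
  have f: "finite E" using assms by (simp add: good_def)
  have c: "\<And>t. (\<Sum>v\<in>{v\<in>fst ` E. birth v = t}. SS E v)
           = (m+1) * (\<Sum>v\<in>{v\<in>fst ` E. birth v = t}. dg E v)" using assms by (simp add: good_def)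
  have "(\<Sum>v\<in>fst`E. SS E v) = (\<Sum>t\<in>birth ` fst ` E. \<Sum>v\<in>{v\<in>fst ` E. birth v = t}. SS E v)"
    by (rule sum.group[symmetric]) (auto simp: f)
  also have "\<dots> = (\<Sum>t\<in>birth ` fst ` E. (m+1) * (\<Sum>v\<in>{v\<in>fst ` E. birth v = t}. dg E v))"
    using c by simp
  also have "\<dots> = (m+1) * (\<Sum>t\<in>birth ` fst ` E. (\<Sum>v\<in>{v\<in>fst ` E. birth v = t}. dg E v))"
    by (simp add: sum_distrib_left)
  also have "(\<Sum>t\<in>birth ` fst ` E. (\<Sum>v\<in>{v\<in>fst ` E. birth v = t}. dg E v)) = (\<Sum>v\<in>fst`E. dg E v)"
    by (rule sum.group) (auto simp: f)
  finally show ?thesis .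
qed

lemma nbr_grow_old: "birth x \<noteq> g \<Longrightarrow> nbr (grow g E) x = nbr E x \<union> Mid g x ` nbr E x"
  by (auto simp: nbr_def grow_def)

lemma nbr_grow_new:
  assumes old: "\<forall>p\<in>E. birth (fst p) < g"
  shows "nbr (grow g E) (Mid g u v) = (if (u,v)\<in>E then {u, Mid g v u} else {})"
proof -
  have "(Mid g u v, w) \<notin> E" for w using old by force
  thus ?thesis by (auto simp: nbr_def grow_def)
qed

lemma verts_grow: "fst ` grow g E = fst ` E \<union> (\<lambda>p. Mid g (fst p) (snd p)) ` E"
proof
  show "fst ` grow g E \<subseteq> fst ` E \<union> (\<lambda>p. Mid g (fst p) (snd p)) ` E"
    by (auto simp: grow_def image_iff) force+
  show "fst ` E \<union> (\<lambda>p. Mid g (fst p) (snd p)) ` E \<subseteq> fst ` grow g E"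
  proof
    fix x assume "x \<in> fst ` E \<union> (\<lambda>p. Mid g (fst p) (snd p)) ` E"
    thus "x \<in> fst ` grow g E"
    proof
      assume "x \<in> fst ` E" thus ?thesis by (force simp: grow_def)
    next
      assume "x \<in> (\<lambda>p. Mid g (fst p) (snd p)) ` E"
      then obtain a b where ab: "(a,b) \<in> E" "x = Mid g a b" by auto
      hence "(Mid g a b, a) \<in> grow g E" by (auto simp: grow_def)
      thus ?thesis using ab by force
    qed
  qed
qed

lemma dg_grow_old:
  assumes "finite E" "\<forall>p\<in>E. birth (snd p) < g" "birth x \<noteq> g"
  shows "dg (grow g E) x = 2 * dg E x"
proof -
  have d: "nbr E x \<inter> Mid g x ` nbr E x = {}" using assms(2) by (force simp: nbr_def)
  have i: "inj_on (Mid g x) (nbr E x)" by (auto simp: inj_on_def)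
  show ?thesis unfolding dg_def nbr_grow_old[OF assms(3)]
    by (simp add: card_Un_disjoint[OF nbr_finite[OF assms(1)] _ d] nbr_finite[OF assms(1)]
        card_image[OF i])
qed

lemma dg_grow_new:
  assumes "\<forall>p\<in>E. birth (fst p) < g" "(u,v) \<in> E"
  shows "dg (grow g E) (Mid g u v) = 2"
proof -
  have "birth u < g" using assms by force
  hence "u \<noteq> Mid g v u" by auto
  thus ?thesis unfolding dg_def nbr_grow_new[OF assms(1)] using assms(2) by simp
qed

lemma good_step:
  assumes G: "good m E"
  shows "good (Suc m) (grow (Suc m) E)"
proof -
  let ?g = "Suc m"
  let ?E' = "grow ?g E"
  let ?V = "fst ` E"
  let ?M = "(\<lambda>p. Mid ?g (fst p) (snd p)) ` E"
  have fin: "finite E" and sym: "\<forall>u v. (u,v) \<in> E \<longrightarrow> (v,u) \<in> E"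
    and bir: "\<forall>p\<in>E. 1 \<le> birth (fst p) \<and> birth (fst p) \<le> m"
    and dgf: "\<forall>v\<in>?V. dg E v = 2 ^ (m + 1 - birth v)"
    and cls: "\<And>t. (\<Sum>v\<in>{v\<in>?V. birth v = t}. SS E v)
           = (m+1) * (\<Sum>v\<in>{v\<in>?V. birth v = t}. dg E v)"
    using G by (auto simp: good_def)
  have oldf: "\<forall>p\<in>E. birth (fst p) < ?g" using bir by auto
  have olds: "\<forall>p\<in>E. birth (snd p) < ?g"
  proof
    fix p assume "p \<in> E"
    hence "(snd p, fst p) \<in> E" using sym by (cases p) auto
    thus "birth (snd p) < ?g" using oldf by force
  qed
  have bV: "\<And>v. v \<in> ?V \<Longrightarrow> 1 \<le> birth v \<and> birth v \<le> m" using bir by force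
  have nV: "\<And>v w. w \<in> nbr E v \<Longrightarrow> w \<in> ?V" using nbr_sub[OF sym] by blast
  have nE: "\<And>v w. w \<in> nbr E v \<Longrightarrow> (v,w) \<in> E" by (simp add: nbr_def)
  have dgo: "\<And>v. v \<in> ?V \<Longrightarrow> dg ?E' v = 2 * dg E v"
    using dg_grow_old[OF fin olds] bV by force
  have dgn: "\<And>p. p \<in> E \<Longrightarrow> dg ?E' (Mid ?g (fst p) (snd p)) = 2"
    using dg_grow_new[OF oldf] by (metis prod.collapse)
  have vg: "fst ` ?E' = ?V \<union> ?M" by (rule verts_grow)
  have finE': "finite ?E'"
  proof -
    have "?E' = E \<union> (\<lambda>p. (fst p, Mid ?g (fst p) (snd p)))`E
        \<union> (\<lambda>p. (Mid ?g (fst p) (snd p), fst p))`E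
        \<union> (\<lambda>p. (Mid ?g (fst p) (snd p), Mid ?g (snd p) (fst p)))`E"
      unfolding grow_def by force
    thus ?thesis using fin by simp
  qed
  have symE': "\<forall>u v. (u,v) \<in> ?E' \<longrightarrow> (v,u) \<in> ?E'"
    using sym unfolding grow_def by blast
  have birE': "\<forall>p\<in>?E'. 1 \<le> birth (fst p) \<and> birth (fst p) \<le> Suc m"
    using bir unfolding grow_def by force
  have dgE': "\<forall>v\<in>fst ` ?E'. dg ?E' v = 2 ^ (Suc m + 1 - birth v)"
  proof
    fix v assume "v \<in> fst ` ?E'"
    hence "v \<in> ?V \<or> v \<in> ?M" using vg by auto
    thus "dg ?E' v = 2 ^ (Suc m + 1 - birth v)"
    proof
      assume v: "v \<in> ?V"
      have "Suc m + 1 - birth v = Suc (m + 1 - birth v)" using bV[OF v] by auto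
      thus ?thesis using dgo[OF v] dgf v by simp
    next
      assume "v \<in> ?M"
      then obtain p where "p \<in> E" "v = Mid ?g (fst p) (snd p)" by auto
      thus ?thesis using dgn by simp
    qed
  qed
  have SSo: "SS ?E' v = 2 * SS E v + 2 * dg E v" if v: "v \<in> ?V" for v
  proof -
    have bv: "birth v \<noteq> ?g" using bV[OF v] by auto
    have d: "nbr E v \<inter> Mid ?g v ` nbr E v = {}" using bV nV by force
    have i: "inj_on (Mid ?g v) (nbr E v)" by (auto simp: inj_on_def)
    have "SS ?E' v = (\<Sum>w\<in>nbr E v. dg ?E' w) + (\<Sum>w\<in>Mid ?g v ` nbr E v. dg ?E' w)"
      unfolding SS_def nbr_grow_old[OF bv]
      by (rule sum.union_disjoint) (auto simp: nbr_finite[OF fin] d)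
    also have "(\<Sum>w\<in>nbr E v. dg ?E' w) = (\<Sum>w\<in>nbr E v. 2 * dg E w)"
      using dgo nV by (intro sum.cong) auto
    also have "(\<Sum>w\<in>Mid ?g v ` nbr E v. dg ?E' w) = (\<Sum>w\<in>nbr E v. dg ?E' (Mid ?g v w))"
      by (simp add: sum.reindex[OF i])
    also have "\<dots> = (\<Sum>w\<in>nbr E v. 2)"
      using dgn nE by (intro sum.cong) force+
    finally show ?thesis by (simp add: SS_def dg_def sum_distrib_left)
  qed
  have SSn: "SS ?E' (Mid ?g (fst p) (snd p)) = 2 * dg E (fst p) + 2" if p: "p \<in> E" for p
  proof -
    obtain a b where ab: "p = (a,b)" by (cases p)
    have ab': "(a,b) \<in> E" using p ab by simp
    have "birth a < ?g" using oldf ab' by force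
    hence ne: "a \<noteq> Mid ?g b a" by auto
    have aV: "a \<in> ?V" using ab' by force
    have "(b,a) \<in> E" using sym ab' by blast
    hence "dg ?E' (Mid ?g b a) = 2" using dgn by force
    thus ?thesis unfolding SS_def nbr_grow_new[OF oldf] using ab ab' ne dgo[OF aV] by simp
  qed
  have cls': "(\<Sum>v\<in>{v\<in>fst ` ?E'. birth v = t}. SS ?E' v)
           = (Suc m+1) * (\<Sum>v\<in>{v\<in>fst ` ?E'. birth v = t}. dg ?E' v)" for t
  proof (cases "t = ?g")
    case True
    have C: "{v\<in>fst ` ?E'. birth v = t} = ?M" using vg True bV by force
    have i: "inj_on (\<lambda>p. Mid ?g (fst p) (snd p)) E" by (auto simp: inj_on_def prod_eq_iff)
    have "(\<Sum>v\<in>?M. SS ?E' v) = (\<Sum>p\<in>E. 2 * dg E (fst p) + 2)"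
      by (simp add: sum.reindex[OF i] SSn)
    also have "\<dots> = (\<Sum>v\<in>?V. dg E v * (2 * dg E v + 2))" by (rule sum_fst[OF fin])
    also have "\<dots> = 2 * (\<Sum>v\<in>?V. dg E v * dg E v) + 2 * (\<Sum>v\<in>?V. dg E v)"
      by (simp add: algebra_simps sum.distrib sum_distrib_left)
    also have "(\<Sum>v\<in>?V. dg E v * dg E v) = (m+1) * (\<Sum>v\<in>?V. dg E v)"
      using sum_sq[OF fin sym] total[OF G] by simp
    finally have A: "(\<Sum>v\<in>?M. SS ?E' v) = 2 * ((m + 1) * (\<Sum>v\<in>?V. dg E v)) + 2 * (\<Sum>v\<in>?V. dg E v)" .
    have "(\<Sum>v\<in>?M. dg ?E' v) = (\<Sum>p\<in>E. 2)"
      by (simp add: sum.reindex[OF i] dgn)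
    also have "\<dots> = (\<Sum>v\<in>?V. dg E v * 2)" by (rule sum_fst[OF fin])
    finally have B: "(\<Sum>v\<in>?M. dg ?E' v) = 2 * (\<Sum>v\<in>?V. dg E v)" by (simp add: sum_distrib_left mult.commute)
    show ?thesis unfolding C A B by (simp add: algebra_simps)
  next
    case False
    have C: "{v\<in>fst ` ?E'. birth v = t} = {v\<in>?V. birth v = t}" using vg False by force
    have A: "(\<Sum>v\<in>{v\<in>?V. birth v = t}. SS ?E' v) = 2 * (\<Sum>v\<in>{v\<in>?V. birth v = t}. SS E v) + 2 * (\<Sum>v\<in>{v\<in>?V. birth v = t}. dg E v)"
      using SSo by (simp add: sum.distrib sum_distrib_left)
    have B: "(\<Sum>v\<in>{v\<in>?V. birth v = t}. dg ?E' v) = 2 * (\<Sum>v\<in>{v\<in>?V. birth v = t}. dg E v)"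
      using dgo by (simp add: sum_distrib_left)
    show ?thesis unfolding C A B cls by (simp add: algebra_simps)
  qed
  show ?thesis unfolding good_def using finE' symE' birE' dgE' cls' by blast
qed

lemma cycle4_eq: "cycle4 = {(Orig 0,Orig 1),(Orig 1,Orig 2),(Orig 2,Orig 3),(Orig 3,Orig 0),
   (Orig 1,Orig 0),(Orig 2,Orig 1),(Orig 3,Orig 2),(Orig 0,Orig 3)}"
proof -
  have e: "i < (4::nat) \<longleftrightarrow> i = 0 \<or> i = 1 \<or> i = 2 \<or> i = 3" for i by auto
  show ?thesis unfolding cycle4_def e by auto
qed

lemma good_base: "good 1 cycle4"
proof -
  have V: "fst ` cycle4 = {Orig 0, Orig 1, Orig 2, Orig 3}" unfolding cycle4_eq by auto
  have n0: "nbr cycle4 (Orig 0) = {Orig 1, Orig 3}" by (auto simp: cycle4_eq nbr_def)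
  have n1: "nbr cycle4 (Orig 1) = {Orig 0, Orig 2}" by (auto simp: cycle4_eq nbr_def)
  have n2: "nbr cycle4 (Orig 2) = {Orig 1, Orig 3}" by (auto simp: cycle4_eq nbr_def)
  have n3: "nbr cycle4 (Orig 3) = {Orig 0, Orig 2}" by (auto simp: cycle4_eq nbr_def)
  have d: "\<forall>v\<in>fst ` cycle4. dg cycle4 v = 2" unfolding V by (simp add: dg_def n0 n1[simplified] n2 n3)
  have s: "\<forall>v\<in>fst ` cycle4. SS cycle4 v = 4" using d unfolding V by (simp add: SS_def n0 n1[simplified] n2 n3)
  have c: "(\<Sum>v\<in>{v\<in>fst ` cycle4. birth v = t}. SS cycle4 v)
           = (1+1) * (\<Sum>v\<in>{v\<in>fst ` cycle4. birth v = t}. dg cycle4 v)" for t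
  proof -
    have "(\<Sum>v\<in>{v\<in>fst ` cycle4. birth v = t}. SS cycle4 v) = (\<Sum>v\<in>{v\<in>fst ` cycle4. birth v = t}. 4)"
      using s by (intro sum.cong) auto
    moreover have "(\<Sum>v\<in>{v\<in>fst ` cycle4. birth v = t}. dg cycle4 v) = (\<Sum>v\<in>{v\<in>fst ` cycle4. birth v = t}. 2)"
      using d by (intro sum.cong) auto
    ultimately show ?thesis by simp
  qed
  have b: "\<forall>p\<in>cycle4. 1 \<le> birth (fst p) \<and> birth (fst p) \<le> 1" unfolding cycle4_eq by auto
  have sy: "\<forall>u v. (u,v) \<in> cycle4 \<longrightarrow> (v,u) \<in> cycle4" unfolding cycle4_eq by auto
  have f: "finite cycle4" unfolding cycle4_eq by simp
  have d2: "\<forall>v\<in>fst ` cycle4. dg cycle4 v = 2 ^ (1 + 1 - birth v)" using d unfolding V by simp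
  show ?thesis unfolding good_def using f sy b d2 c by blast
qed

lemma good_H: "m \<ge> 1 \<Longrightarrow> good m (H m)"
proof (induction m)
  case 0 thus ?case by simp
next
  case (Suc n)
  show ?case
  proof (cases n)
    case 0 thus ?thesis using good_base by simp
  next
    case (Suc k)
    hence "good n (H n)" using Suc.IH by simp
    thus ?thesis using Suc good_step by simp
  qed
qed

theorem proposition7:
  fixes g d :: nat
  assumes "g \<ge> 1" and "d \<in> deg g ` verts g"
  shows "knn g d = real g + 1"
proof -
  have G: "good g (H g)" using good_H assms(1) by simp
  let ?E = "H g"
  let ?V = "fst ` ?E"
  have vv: "verts g = ?V" by (simp add: verts_def)
  have dd: "deg g = dg ?E" by (simp add: deg_def dg_def nbr_def fun_eq_iff)
  have fin: "finite ?E" and bir: "\<forall>p\<in>?E. 1 \<le> birth (fst p) \<and> birth (fst p) \<le> g"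
    and dgf: "\<forall>v\<in>?V. dg ?E v = 2 ^ (g + 1 - birth v)"
    and cls: "\<And>t. (\<Sum>v\<in>{v\<in>?V. birth v = t}. SS ?E v)
           = (g+1) * (\<Sum>v\<in>{v\<in>?V. birth v = t}. dg ?E v)"
    using G by (auto simp: good_def)
  have bV: "\<And>v. v \<in> ?V \<Longrightarrow> 1 \<le> birth v \<and> birth v \<le> g" using bir by force
  obtain v0 where v0: "v0 \<in> ?V" "d = dg ?E v0" using assms(2) vv dd by auto
  let ?C = "{v\<in>?V. birth v = birth v0}"
  have C: "{v \<in> verts g. deg g v = d} = ?C"
  proof -
    have "dg ?E v = dg ?E v0 \<longleftrightarrow> birth v = birth v0" if v: "v \<in> ?V" for v
    proof -
      have e1: "dg ?E v = 2 ^ (g + 1 - birth v)" using dgf v by blast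
      have e2: "dg ?E v0 = 2 ^ (g + 1 - birth v0)" using dgf v0 by blast
      have "dg ?E v = dg ?E v0 \<longleftrightarrow> g + 1 - birth v = g + 1 - birth v0"
        unfolding e1 e2 by (rule power_inject_exp) simp
      also have "\<dots> \<longleftrightarrow> birth v = birth v0" using bV[OF v] bV[OF v0(1)] by auto
      finally show ?thesis .
    qed
    thus ?thesis using vv dd v0 by auto
  qed
  have finC: "finite ?C" using fin by simp
  have pos: "(\<Sum>v\<in>?C. dg ?E v) > 0"
  proof -
    have "dg ?E v0 = 2 ^ (g + 1 - birth v0)" using dgf v0 by blast
    hence "dg ?E v0 > 0" by simp
    moreover have "v0 \<in> ?C" using v0 by simp
    ultimately have "dg ?E v0 \<le> (\<Sum>v\<in>?C. dg ?E v)"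
      using finC by (intro member_le_sum) auto
    thus ?thesis using \<open>dg ?E v0 > 0\<close> by linarith
  qed
  have num: "(\<Sum>v\<in>?C. \<Sum>w\<in>{w. (v, w) \<in> ?E}. real (deg g w)) = real (\<Sum>v\<in>?C. SS ?E v)"
    by (simp add: SS_def nbr_def dd)
  have den: "(\<Sum>v\<in>?C. real (deg g v)) = real (\<Sum>v\<in>?C. dg ?E v)" by (simp add: dd)
  have "knn g d = real (\<Sum>v\<in>?C. SS ?E v) / real (\<Sum>v\<in>?C. dg ?E v)"
    unfolding knn_def C num den ..
  also have "\<dots> = real ((g+1) * (\<Sum>v\<in>?C. dg ?E v)) / real (\<Sum>v\<in>?C. dg ?E v)"
    using cls[of "birth v0"] by (simp only:)
  also have "\<dots> = real g + 1"
  proof -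
    define X where "X = real (\<Sum>v\<in>?C. dg ?E v)"
    have X: "X \<noteq> 0" using pos unfolding X_def by (metis of_nat_0_less_iff less_irrefl)
    have "real ((g+1) * (\<Sum>v\<in>?C. dg ?E v)) = (real g + 1) * X"
      unfolding X_def by (simp only: of_nat_mult of_nat_add of_nat_1)
    thus ?thesis using X unfolding X_def[symmetric] by simp
  qed
  finally show ?thesis .
qed

end
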